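(* Let $\lambda,\mu>0$ and let $\Theta$ have the inverse Gaussian density $f_\Theta(x)=\sqrt{\lambda/(2\pi)}\,x^{-3/2}\exp\!\big(-\lambda(x-\mu)^2/(2\mu^2x)\big)$, $x>0$. Let $(X_1,\dots,X_n)$ be such that, given $\Theta=\theta$, $X_1,\dots,X_n$ are independent exponential with rate $\theta$; equivalently $$\Pr(X_1>x_1,\dots,X_n>x_n)=\exp\Big\{-\frac{\lambda}{\mu}\Big(\sqrt{1+\tfrac{2\mu^2}{\lambda}\textstyle\sum_{j=1}^n x_j}-1\Big)\Big\},\quad x_j\ge0.$$ Set $c=2\mu^2/\lambda$, $a(x)=\sqrt{1+cx}-1$, $b(x)=\frac{\lambda}{\mu}a(x)$, and $a_j=\frac{(-1)^{j-1}(2j-2)!}{2^{2j-1}(j-1)!}$ for $j\ge1$. Then the pdf of $S_n=X_1+\dots+X_n$ is $$f_{S_n}(x)=\frac{x^{n-1}}{\Gamma(n)}\sum_{k=1}^n(-1)^{n+k}\Big(\frac{\lambda}{\mu}\Big)^k e^{-b(x)}u_{n,k}(x),\qquad x>0,$$ and $f_{S_n}(x)=0$ for $x<0$, where $$u_{n,k}(x)=B_{n,k}\big(a_1c^1(1+cx)^{1/2-1},\,a_2c^2(1+cx)^{1/2-2},\dots,a_{n-k+1}c^{n-k+1}(1+cx)^{1/2-(n-k+1)}\big).$$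
   Context: The partial Bell polynomials are $B_{n,k}(x_1,\dots,x_{n-k+1})=\sum\frac{n!}{j_1!\cdots j_{n-k+1}!}\big(\frac{x_1}{1!}\big)^{j_1}\cdots\big(\frac{x_{n-k+1}}{(n-k+1)!}\big)^{j_{n-k+1}}$, the sum over all non-negative integers $j_1,\dots,j_{n-k+1}$ with $\sum_i j_i=k$ and $\sum_i i\,j_i=n$. *)

theory Defs
  imports "HOL-Probability.Probability"
begin

text \<open>Partial Bell polynomial B_{n,k}(x_1,...,x_{n-k+1}); the arguments are given as a
  function x indexed from 1.\<close>
definition bell_partial :: "nat \<Rightarrow> nat \<Rightarrow> (nat \<Rightarrow> real) \<Rightarrow> real" where
  "bell_partial n k x =
     (\<Sum>j \<in> {j \<in> {1..n-k+1} \<rightarrow>\<^sub>E {0..n}.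
              (\<Sum>i\<in>{1..n-k+1}. j i) = k \<and> (\<Sum>i\<in>{1..n-k+1}. i * j i) = n}.
        fact n / (\<Prod>i\<in>{1..n-k+1}. fact (j i)) *
        (\<Prod>i\<in>{1..n-k+1}. (x i / fact i) ^ (j i)))"

definition ig_coeff :: "nat \<Rightarrow> real" where
  "ig_coeff j = (-1) ^ (j - 1) * fact (2 * j - 2) / (2 ^ (2 * j - 1) * fact (j - 1))"

definition ig_u :: "real \<Rightarrow> real \<Rightarrow> nat \<Rightarrow> nat \<Rightarrow> real \<Rightarrow> real" where
  "ig_u lam mu n k x =
     (let c = 2 * mu\<^sup>2 / lam in
      bell_partial n k (\<lambda>i. ig_coeff i * c ^ i * (1 + c * x) powr (1/2 - real i)))"

definition ig_sum_pdf :: "real \<Rightarrow> real \<Rightarrow> nat \<Rightarrow> real \<Rightarrow> real" where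
  "ig_sum_pdf lam mu n x =
     (if x > 0 then
        (let c = 2 * mu\<^sup>2 / lam; b = lam / mu * (sqrt (1 + c * x) - 1) in
         x ^ (n - 1) / Gamma (real n) *
         (\<Sum>k=1..n. (-1) ^ (n + k) * (lam / mu) ^ k * exp (- b) * ig_u lam mu n k x))
      else 0)"

end

theory Submission
  imports Defs "HOL-Computational_Algebra.Formal_Power_Series"
begin


unbundle no vec_syntax
unbundle fps_syntax

lemma ig_coeff_Suc_aux:
  fixes a F P fm r :: real
  assumes "fm > 0" "P > 0" "r \<ge> 0"
  shows "- a * ((2*r + 2) * (2*r+1) * F) / (4 * P * ((r + 1) * fm)) =
         a * F / (P * fm) * (1/2 - (1 + r))"
proof -
  have "r + 1 \<noteq> 0" using assms by simp
  have "(2*r+2) = 2*(r+1)" by simp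
  then have "- a * ((2*r + 2) * (2*r+1) * F) / (4 * P * ((r + 1) * fm)) = (- a * (2*r+1) * F) * (2*(r+1)) / ((2 * P * fm) * (2*(r+1)))"
    by (simp add: algebra_simps)
  also have "\<dots> = - a * (2*r+1) * F / (2 * P * fm)"
  proof -
    have "2*(r+1) \<noteq> 0" using \<open>r+1 \<noteq> 0\<close> by simp
    then show ?thesis by (rule mult_divide_mult_cancel_right)
  qed
  also have "\<dots> = a * F / (P * fm) * (1/2 - (1 + r))"
  proof -
    have "(1/2 - (1 + r)) = - (2*r+1) / 2" by simp
    then show ?thesis using assms by (simp add: field_simps)
  qed
  finally show ?thesis .
qed

lemma ig_coeff_Suc:
  assumes "i \<ge> 1"
  shows "ig_coeff (Suc i) = ig_coeff i * (1/2 - real i)"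
proof -
  obtain m where i: "i = Suc m" using assms by (cases i) auto
  have f1: "fact (2 * Suc (Suc m) - 2) = (2*real m + 2) * (2*real m+1) * (fact (2 * Suc m - 2) :: real)"
    by (simp add: fact_Suc algebra_simps)
  have f2: "fact (Suc (Suc m) - 1) = (real m + 1) * (fact (Suc m - 1) :: real)"
    by (simp add: fact_Suc)
  have p: "(2::real) ^ (2 * Suc (Suc m) - 1) = 4 * 2 ^ (2 * Suc m - 1)"
    by (simp add: power_Suc)
  have s: "(-1::real) ^ (Suc (Suc m) - 1) = - ((-1) ^ (Suc m - 1))" by simp
  have pos: "(fact (Suc m - 1)::real) > 0" "(2::real) ^ (2 * Suc m - 1) > 0" "real m \<ge> 0" by auto
  show ?thesis
    unfolding i ig_coeff_def
    apply (simp only: f1 f2 p s of_nat_Suc)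
    apply (rule ig_coeff_Suc_aux[OF pos])
    done
qed

lemma ig_coeff_1: "ig_coeff 1 = 1/2" by (simp add: ig_coeff_def)

lemma ig_coeff_sign: assumes "i \<ge> 1" shows "(-1) ^ (i+1) * ig_coeff i \<ge> 0"
proof -
  have "(-1::real) ^ (i+1) * (-1) ^ (i - 1) = 1"
  proof (cases i)
    case (Suc m) then show ?thesis by (simp add: power_add[symmetric] flip: power_mult_distrib)
  qed (use assms in simp)
  then have "(-1) ^ (i+1) * ig_coeff i = fact (2 * i - 2) / (2 ^ (2 * i - 1) * fact (i - 1))"
    unfolding ig_coeff_def by (metis (no_types, lifting) mult.assoc mult_1 times_divide_eq_right)
  then show ?thesis by simp
qed

lemma fps_pow_nth_low:
  fixes p :: "'a::comm_ring_1 fps"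
  assumes "p $ 0 = 0"
  shows "n < k \<Longrightarrow> (p ^ k) $ n = 0"
proof (induction k arbitrary: n)
  case 0 then show ?case by simp
next
  case (Suc k)
  have "(p ^ Suc k) $ n = (\<Sum>i=0..n. p$i * (p^k) $ (n - i))"
    by (simp add: fps_mult_nth)
  also have "\<dots> = 0"
  proof (rule sum.neutral, intro ballI)
    fix i assume "i \<in> {0..n}"
    show "p$i * (p^k) $ (n - i) = 0"
    proof (cases "i = 0")
      case True then show ?thesis using assms by simp
    next
      case False then have "n - i < k" using Suc.prems \<open>i \<in> {0..n}\<close> by auto
      then show ?thesis using Suc.IH by simp
    qed
  qed
  finally show ?case .
qed

lemma fps_pow_deriv:
  fixes p :: "real \<Rightarrow> real fps"
  assumes "\<And>i. ((\<lambda>x. p x $ i) has_real_derivative (q $ i)) (at x)"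
  shows "((\<lambda>x. (p x ^ k) $ n) has_real_derivative (of_nat k * p x ^ (k - 1) * q) $ n) (at x)"
proof (induction k arbitrary: n)
  case 0 then show ?case by simp
next
  case (Suc k)
  have eq: "(\<lambda>x. (p x ^ Suc k) $ n) = (\<lambda>x. \<Sum>i=0..n. p x $ i * (p x ^ k) $ (n - i))"
    by (simp add: fps_mult_nth)
  have "((\<lambda>x. \<Sum>i=0..n. p x $ i * (p x ^ k) $ (n - i)) has_real_derivative
          (\<Sum>i=0..n. q $ i * (p x ^ k) $ (n - i) + (of_nat k * p x ^ (k - 1) * q) $ (n - i) * p x $ i)) (at x)"
    by (intro DERIV_sum DERIV_mult assms Suc.IH)
  moreover have "(\<Sum>i=0..n. q $ i * (p x ^ k) $ (n - i) + (of_nat k * p x ^ (k - 1) * q) $ (n - i) * p x $ i) =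
     (\<Sum>i=0..n. q $ i * (p x ^ k) $ (n - i) + p x $ i * (of_nat k * p x ^ (k - 1) * q) $ (n - i))"
    by (simp add: mult.commute)
  moreover have "(\<Sum>i=0..n. q $ i * (p x ^ k) $ (n - i) + p x $ i * (of_nat k * p x ^ (k - 1) * q) $ (n - i))
     = (q * p x ^ k) $ n + (p x * (of_nat k * p x ^ (k - 1) * q)) $ n"
    by (simp add: fps_mult_nth sum.distrib)
  moreover have "q * p x ^ k + p x * (of_nat k * p x ^ (k - 1) * q) = of_nat (Suc k) * p x ^ (Suc k - 1) * q"
  proof (cases k)
    case 0 then show ?thesis by simp
  next
    case (Suc m) then show ?thesis by (simp add: algebra_simps)
  qed
  then have "(q * p x ^ k) $ n + (p x * (of_nat k * p x ^ (k - 1) * q)) $ n = (of_nat (Suc k) * p x ^ (Suc k - 1) * q) $ n"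
    by (metis fps_add_nth)
  ultimately show ?case unfolding eq by (simp only:)
qed

lemma fps_pow_sign:
  fixes p :: "real fps"
  assumes "p $ 0 = 0" "\<And>i. (-1) ^ (i + 1) * p $ i \<ge> 0"
  shows "(-1) ^ (n + k) * (p ^ k) $ n \<ge> 0"
proof (induction k arbitrary: n)
  case 0 then show ?case by simp
next
  case (Suc k)
  have "(-1) ^ (n + Suc k) * (p ^ Suc k) $ n = (\<Sum>i=0..n. ((-1) ^ (i+1) * p$i) * ((-1) ^ (n - i + k) * (p^k) $ (n - i)))"
    unfolding power_Suc fps_mult_nth sum_distrib_left
  proof (rule sum.cong[OF refl])
    fix i assume "i \<in> {0..n}"
    then have "n + Suc k = (i + 1) + (n - i + k)" by auto
    then have "(-1::real) ^ (n + Suc k) = (-1) ^ (i+1) * (-1) ^ (n - i + k)"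
      by (simp only: power_add)
    then show "(-1) ^ (n + Suc k) * (p $ i * (p ^ k) $ (n - i)) =
       (-1) ^ (i + 1) * p $ i * ((-1) ^ (n - i + k) * (p ^ k) $ (n - i))"
      by (simp add: algebra_simps)
  qed
  also have "\<dots> \<ge> 0"
    by (intro sum_nonneg mult_nonneg_nonneg assms Suc.IH)
  finally show ?case .
qed

lemma fps_pow_dep:
  fixes p q :: "'a::comm_ring_1 fps"
  assumes "p $ 0 = 0" "q $ 0 = 0"
  shows "(\<And>i. 1 \<le> i \<Longrightarrow> i + k \<le> n + 1 \<Longrightarrow> p $ i = q $ i) \<Longrightarrow> (p ^ k) $ n = (q ^ k) $ n"
proof (induction k arbitrary: n)
  case 0 then show ?case by simp
next
  case (Suc k)
  have "(p ^ Suc k) $ n = (\<Sum>i=0..n. p$i * (p^k) $ (n - i))"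
    by (simp add: fps_mult_nth)
  also have "\<dots> = (\<Sum>i=0..n. q$i * (q^k) $ (n - i))"
  proof (rule sum.cong[OF refl])
    fix i assume i: "i \<in> {0..n}"
    show "p$i * (p^k) $ (n - i) = q$i * (q^k) $ (n - i)"
    proof (cases "i = 0")
      case True then show ?thesis using assms by simp
    next
      case False
      show ?thesis
      proof (cases "i + Suc k \<le> n + 1")
        case True
        have "p $ i = q $ i" using Suc.prems[of i] True False by simp
        moreover have "(p^k) $ (n - i) = (q^k) $ (n - i)"
          by (rule Suc.IH) (use Suc.prems False True i in auto)
        ultimately show ?thesis by simp
      next
        case False2: False
        then have "n - i < k" using False i by auto
        then show ?thesis using fps_pow_nth_low[OF assms(1)] fps_pow_nth_low[OF assms(2)] by simp
      qed
    qed
  qed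
  also have "\<dots> = (q ^ Suc k) $ n" by (simp add: fps_mult_nth)
  finally show ?case .
qed

definition mV :: "nat \<Rightarrow> nat \<Rightarrow> nat \<Rightarrow> (nat \<Rightarrow> nat) set" where
  "mV m n k = {j \<in> {1..m} \<rightarrow>\<^sub>E {0..n}. (\<Sum>i\<in>{1..m}. j i) = k \<and> (\<Sum>i\<in>{1..m}. i * j i) = n}"

lemma finite_mV: "finite (mV m n k)"
  unfolding mV_def by (rule finite_subset[OF _ finite_PiE[of "{1..m}" "\<lambda>_. {0..n}"]]) auto

lemma sum_upd:
  fixes h :: "nat \<Rightarrow> nat \<Rightarrow> 'b::comm_monoid_add"
  assumes "finite A" "i \<in> A"
  shows "(\<Sum>l\<in>A. h l ((f(i:=v)) l)) = h i v + (\<Sum>l\<in>A-{i}. h l (f l))"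
  using assms by (simp add: sum.remove)

lemma prod_upd:
  fixes h :: "nat \<Rightarrow> nat \<Rightarrow> 'b::comm_monoid_mult"
  assumes "finite A" "i \<in> A"
  shows "(\<Prod>l\<in>A. h l ((f(i:=v)) l)) = h i v * (\<Prod>l\<in>A-{i}. h l (f l))"
  using assms by (simp add: prod.remove)

definition mw :: "real fps \<Rightarrow> nat \<Rightarrow> nat \<Rightarrow> (nat \<Rightarrow> nat) \<Rightarrow> real" where
  "mw p m k j = fact k / (\<Prod>i\<in>{1..m}. fact (j i)) * (\<Prod>i\<in>{1..m}. (p$i) ^ (j i))"

lemma mV_0: "mV m n 0 = (if n = 0 then {restrict (\<lambda>_. 0) {1..m}} else {})"
proof -
  have "j \<in> mV m n 0 \<longleftrightarrow> n = 0 \<and> j = restrict (\<lambda>_. 0) {1..m}" for j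
  proof
    assume j: "j \<in> mV m n 0"
    then have "\<forall>i\<in>{1..m}. j i = 0" unfolding mV_def by auto
    moreover have "j \<in> extensional {1..m}" using j unfolding mV_def by (auto simp: PiE_def)
    ultimately have "j = restrict (\<lambda>_. 0) {1..m}" by (auto simp: extensional_def fun_eq_iff)
    moreover have "n = 0" using j \<open>\<forall>i\<in>{1..m}. j i = 0\<close> unfolding mV_def by auto
    ultimately show "n = 0 \<and> j = restrict (\<lambda>_. 0) {1..m}" by simp
  qed (auto simp: mV_def)
  then show ?thesis by auto
qed

lemma mV_step_sum:
  assumes j: "j \<in> mV m n k"
  shows "(\<Sum>i\<in>{1..m}. real (j i)) = real k"
  using j unfolding mV_def by (simp flip: of_nat_sum)

lemma fact_weight_split:
  assumes j: "j \<in> mV m n (Suc k)"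
  shows "fact (Suc k) / (\<Prod>i\<in>{1..m}. fact (j i)) = (\<Sum>i\<in>{1..m}. real (j i) * fact k / (\<Prod>i\<in>{1..m}. fact (j i)))"
proof -
  have "(\<Sum>i\<in>{1..m}. real (j i) * fact k / (\<Prod>i\<in>{1..m}. fact (j i))) =
        (\<Sum>i\<in>{1..m}. real (j i)) * fact k / (\<Prod>i\<in>{1..m}. fact (j i))"
    by (simp add: sum_divide_distrib sum_distrib_right)
  also have "\<dots> = fact (Suc k) / (\<Prod>i\<in>{1..m}. fact (j i))"
    using mV_step_sum[OF j] by (simp add: fact_Suc)
  finally show ?thesis by simp
qed

lemma mV_reindex:
  assumes i: "i \<in> {1..m}" and p0: "p $ 0 = 0"
  shows "(\<Sum>j\<in>mV m n (Suc k). real (j i) * fact k / (\<Prod>l\<in>{1..m}. fact (j l)) * (\<Prod>l\<in>{1..m}. (p$l) ^ (j l)))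
       = (if i \<le> n then p $ i * (\<Sum>j\<in>mV m (n - i) k. mw p m k j) else 0)"
proof -
  let ?T = "\<lambda>j. real (j i) * fact k / (\<Prod>l\<in>{1..m}. fact (j l)) * (\<Prod>l\<in>{1..m}. (p$l) ^ (j l))"
  have fin: "finite {1..m}" by simp
  have "(\<Sum>j\<in>mV m n (Suc k). ?T j) = (\<Sum>j\<in>{j\<in>mV m n (Suc k). j i \<ge> 1}. ?T j)"
    by (rule sum.mono_neutral_right) (auto simp: finite_mV)
  also have "\<dots> = (if i \<le> n then p $ i * (\<Sum>j\<in>mV m (n - i) k. mw p m k j) else 0)"
  proof (cases "i \<le> n")
    case False
    have E: "{j\<in>mV m n (Suc k). j i \<ge> 1} = {}"
    proof (safe)
      fix j assume j: "j \<in> mV m n (Suc k)" "j i \<ge> 1"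
      have "i * j i \<le> (\<Sum>l\<in>{1..m}. l * j l)"
        by (rule member_le_sum) (use i in auto)
      also have "\<dots> = n" using j unfolding mV_def by auto
      finally have "i \<le> n" using j(2) by (metis le_trans mult_le_mono2 nat_mult_1_right)
      then show "j \<in> {}" using False by simp
    qed
    show ?thesis using False by (simp only: E sum.empty) simp
  next
    case True
    have Tfact: "p $ i * mw p m k (j(i := j i - 1)) = ?T j" if jV: "j \<in> mV m n (Suc k)" and ji: "j i \<ge> 1" for j
    proof -
      have pr1: "(\<Prod>l\<in>{1..m}. fact (j l)) = real (j i) * (\<Prod>l\<in>{1..m}. fact ((j(i := j i - 1)) l))"
      proof -
        have "(\<Prod>l\<in>{1..m}. fact ((j(i := j i - 1)) l)::real) = fact (j i - 1) * (\<Prod>l\<in>{1..m}-{i}. fact (j l))"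
          using prod_upd[OF fin i, of "\<lambda>_ v. fact v"] by simp
        moreover have "(\<Prod>l\<in>{1..m}. fact (j l)::real) = fact (j i) * (\<Prod>l\<in>{1..m}-{i}. fact (j l))"
          using i by (simp add: prod.remove)
        moreover have "(fact (j i)::real) = real (j i) * fact (j i - 1)"
          using ji by (metis Suc_diff_le diff_Suc_1 fact_Suc of_nat_Suc le_refl)
        ultimately show ?thesis by simp
      qed
      have pr2: "(\<Prod>l\<in>{1..m}. (p$l) ^ (j l)) = p $ i * (\<Prod>l\<in>{1..m}. (p$l) ^ ((j(i := j i - 1)) l))"
      proof -
        have "(\<Prod>l\<in>{1..m}. (p$l) ^ ((j(i := j i - 1)) l)) = (p$i) ^ (j i - 1) * (\<Prod>l\<in>{1..m}-{i}. (p$l) ^ (j l))"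
          using prod_upd[OF fin i, of "\<lambda>l v. (p$l) ^ v"] by simp
        moreover have "(\<Prod>l\<in>{1..m}. (p$l) ^ (j l)) = (p$i) ^ (j i) * (\<Prod>l\<in>{1..m}-{i}. (p$l) ^ (j l))"
          using i by (simp add: prod.remove)
        moreover have "(p$i) ^ (j i) = p $ i * (p$i) ^ (j i - 1)"
          using ji by (metis Suc_diff_le diff_Suc_1 power_Suc le_refl)
        ultimately show ?thesis by simp
      qed
      have pos: "(\<Prod>l\<in>{1..m}. fact ((j(i := j i - 1)) l)::real) > 0"
        by (intro prod_pos) auto
      show "p $ i * mw p m k (j(i := j i - 1)) = ?T j"
        unfolding mw_def pr1 pr2 using ji pos by (simp add: field_simps)
    qed
    have "p $ i * (\<Sum>j\<in>mV m (n - i) k. mw p m k j) = (\<Sum>j\<in>mV m (n - i) k. p $ i * mw p m k j)"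
      by (simp add: sum_distrib_left)
    also have "\<dots> = (\<Sum>j\<in>{j\<in>mV m n (Suc k). j i \<ge> 1}. ?T j)"
    proof (rule sum.reindex_bij_witness[where i="\<lambda>j. j(i := j i - 1)" and j="\<lambda>j. j(i := j i + 1)"])
      fix j assume j: "j \<in> {j\<in>mV m n (Suc k). j i \<ge> 1}"
      then show "(j(i := j i - 1))(i := (j(i := j i - 1)) i + 1) = j" by auto
      from j have jV: "j \<in> mV m n (Suc k)" and ji: "j i \<ge> 1" by auto
      have s1: "(\<Sum>l\<in>{1..m}. (j(i := j i - 1)) l) = k"
      proof -
        have "(\<Sum>l\<in>{1..m}. (j(i := j i - 1)) l) = (j i - 1) + (\<Sum>l\<in>{1..m}-{i}. j l)"
          using sum_upd[OF fin i, of "\<lambda>_ v. v"] by simp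
        also have "(\<Sum>l\<in>{1..m}. j l) = j i + (\<Sum>l\<in>{1..m}-{i}. j l)"
          using i by (simp add: sum.remove)
        ultimately show ?thesis using jV ji unfolding mV_def by auto
      qed
      have s2: "(\<Sum>l\<in>{1..m}. l * (j(i := j i - 1)) l) = n - i"
      proof -
        have "(\<Sum>l\<in>{1..m}. l * (j(i := j i - 1)) l) = i * (j i - 1) + (\<Sum>l\<in>{1..m}-{i}. l * j l)"
          using sum_upd[OF fin i, of "\<lambda>l v. l * v"] by simp
        moreover have "(\<Sum>l\<in>{1..m}. l * j l) = i * j i + (\<Sum>l\<in>{1..m}-{i}. l * j l)"
          using i by (simp add: sum.remove)
        moreover have "i * j i = i * (j i - 1) + i" using ji
          by (metis Suc_diff_le diff_Suc_1 mult_Suc_right add.commute)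
        ultimately show ?thesis using jV unfolding mV_def by auto
      qed
      have "j(i := j i - 1) \<in> {1..m} \<rightarrow>\<^sub>E {0..n - i}"
      proof -
        have "j \<in> extensional {1..m}" using jV unfolding mV_def by (auto simp: PiE_def)
        then have e: "j(i := j i - 1) \<in> extensional {1..m}" using i by (auto simp: extensional_def)
        have "(j(i := j i - 1)) l \<le> n - i" if "l \<in> {1..m}" for l
        proof -
          have "l * (j(i := j i - 1)) l \<le> (\<Sum>l\<in>{1..m}. l * (j(i := j i - 1)) l)"
            by (rule member_le_sum) (use that in auto)
          then have "l * (j(i := j i - 1)) l \<le> n - i" using s2 by simp
          moreover have "(j(i := j i - 1)) l \<le> l * (j(i := j i - 1)) l" using that by simp
          ultimately show ?thesis by linarith
        qed
        then show ?thesis using e by (auto simp: PiE_def Pi_def)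
      qed
      then show "j(i := j i - 1) \<in> mV m (n - i) k" using s1 s2 unfolding mV_def by auto
    next
      fix j assume j: "j \<in> mV m (n - i) k"
      show "(j(i := j i + 1))(i := (j(i := j i + 1)) i - 1) = j" by auto
      have s1: "(\<Sum>l\<in>{1..m}. (j(i := j i + 1)) l) = Suc k"
      proof -
        have "(\<Sum>l\<in>{1..m}. (j(i := j i + 1)) l) = (j i + 1) + (\<Sum>l\<in>{1..m}-{i}. j l)"
          using sum_upd[OF fin i, of "\<lambda>_ v. v"] by simp
        moreover have "(\<Sum>l\<in>{1..m}. j l) = j i + (\<Sum>l\<in>{1..m}-{i}. j l)"
          using i by (simp add: sum.remove)
        ultimately show ?thesis using j unfolding mV_def by auto
      qed
      have s2: "(\<Sum>l\<in>{1..m}. l * (j(i := j i + 1)) l) = n"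
      proof -
        have "(\<Sum>l\<in>{1..m}. l * (j(i := j i + 1)) l) = i * (j i + 1) + (\<Sum>l\<in>{1..m}-{i}. l * j l)"
          using sum_upd[OF fin i, of "\<lambda>l v. l * v"] by simp
        moreover have "(\<Sum>l\<in>{1..m}. l * j l) = i * j i + (\<Sum>l\<in>{1..m}-{i}. l * j l)"
          using i by (simp add: sum.remove)
        ultimately show ?thesis using j True unfolding mV_def by auto
      qed
      have "j(i := j i + 1) \<in> {1..m} \<rightarrow>\<^sub>E {0..n}"
      proof -
        have "j \<in> extensional {1..m}" using j unfolding mV_def by (auto simp: PiE_def)
        then have e: "j(i := j i + 1) \<in> extensional {1..m}" using i by (auto simp: extensional_def)
        have "(j(i := j i + 1)) l \<le> n" if "l \<in> {1..m}" for l
        proof -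
          have "l * (j(i := j i + 1)) l \<le> (\<Sum>l\<in>{1..m}. l * (j(i := j i + 1)) l)"
            by (rule member_le_sum) (use that in auto)
          then have "l * (j(i := j i + 1)) l \<le> n" using s2 by simp
          moreover have "(j(i := j i + 1)) l \<le> l * (j(i := j i + 1)) l" using that by simp
          ultimately show ?thesis by linarith
        qed
        then show ?thesis using e by (auto simp: PiE_def Pi_def)
      qed
      then have mem: "j(i := j i + 1) \<in> {j\<in>mV m n (Suc k). j i \<ge> 1}" using s1 s2 unfolding mV_def by auto
      then show "j(i := j i + 1) \<in> {j\<in>mV m n (Suc k). j i \<ge> 1}" .
      show "?T (j(i := j i + 1)) = p $ i * mw p m k j"
        using Tfact[of "j(i := j i + 1)"] mem by simp
    qed
    finally show ?thesis using True by simp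
  qed
  finally show ?thesis .
qed

lemma fps_pow_multinomial:
  fixes p :: "real fps"
  assumes p0: "p $ 0 = 0" and pm: "\<And>i. i > m \<Longrightarrow> p $ i = 0"
  shows "(p ^ k) $ n = (\<Sum>j\<in>mV m n k. mw p m k j)"
proof (induction k arbitrary: n)
  case 0
  show ?case by (simp add: mV_0 mw_def)
next
  case (Suc k)
  let ?X = "\<lambda>i. (\<Sum>j\<in>mV m (n - i) k. mw p m k j)"
  have "(p ^ Suc k) $ n = (\<Sum>i=0..n. p$i * ?X i)"
    by (simp add: fps_mult_nth Suc.IH)
  also have "\<dots> = (\<Sum>i\<in>{0..n}. if i \<in> {1..m} then p$i * ?X i else 0)"
    by (rule sum.cong) (use p0 pm in \<open>auto simp: not_le\<close>)
  also have "\<dots> = (\<Sum>i\<in>{0..n} \<inter> {1..m}. p$i * ?X i)"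
    by (rule sum.inter_restrict[symmetric]) simp
  also have "\<dots> = (\<Sum>i\<in>{1..m} \<inter> {i. i \<le> n}. p$i * ?X i)"
    by (rule sum.cong) auto
  also have "\<dots> = (\<Sum>i\<in>{1..m}. if i \<in> {i. i \<le> n} then p $ i * ?X i else 0)"
    by (rule sum.inter_restrict) simp
  also have "\<dots> = (\<Sum>i\<in>{1..m}. if i \<le> n then p $ i * ?X i else 0)"
    by simp
  also have "\<dots> = (\<Sum>i\<in>{1..m}. \<Sum>j\<in>mV m n (Suc k). real (j i) * fact k / (\<Prod>l\<in>{1..m}. fact (j l)) * (\<Prod>l\<in>{1..m}. (p$l) ^ (j l)))"
    by (rule sum.cong[OF refl], rule mV_reindex[symmetric, OF _ p0]) 
  also have "\<dots> = (\<Sum>j\<in>mV m n (Suc k). \<Sum>i\<in>{1..m}. real (j i) * fact k / (\<Prod>l\<in>{1..m}. fact (j l)) * (\<Prod>l\<in>{1..m}. (p$l) ^ (j l)))"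
    by (rule sum.swap)
  also have "\<dots> = (\<Sum>j\<in>mV m n (Suc k). mw p m (Suc k) j)"
  proof (rule sum.cong[OF refl])
    fix j assume j: "j \<in> mV m n (Suc k)"
    show "(\<Sum>i\<in>{1..m}. real (j i) * fact k / (\<Prod>l\<in>{1..m}. fact (j l)) * (\<Prod>l\<in>{1..m}. (p$l) ^ (j l))) = mw p m (Suc k) j"
      unfolding mw_def fact_weight_split[OF j] by (simp add: sum_distrib_right)
  qed
  finally show ?case .
qed

definition bfps :: "(nat \<Rightarrow> real) \<Rightarrow> real fps" where
  "bfps y = Abs_fps (\<lambda>i. if i = 0 then 0 else y i / fact i)"

lemma bfps_nth: "bfps y $ i = (if i = 0 then 0 else y i / fact i)"
  by (simp add: bfps_def)

lemma bell_partial_fps: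
  assumes "1 \<le> k" "k \<le> n"
  shows "bell_partial n k y = fact n / fact k * (bfps y ^ k) $ n"
proof -
  define m where "m = n - k + 1"
  define Pt where "Pt = Abs_fps (\<lambda>i. if i = 0 \<or> i > m then 0 else y i / fact i)"
  have Pt0: "Pt $ 0 = 0" and Ptm: "\<And>i. i > m \<Longrightarrow> Pt $ i = 0" by (auto simp: Pt_def)
  have "(bfps y ^ k) $ n = (Pt ^ k) $ n"
    by (rule fps_pow_dep) (auto simp: bfps_nth Pt_def m_def)
  also have "\<dots> = (\<Sum>j\<in>mV m n k. mw Pt m k j)"
    by (rule fps_pow_multinomial[OF Pt0 Ptm])
  finally have eq: "(bfps y ^ k) $ n = (\<Sum>j\<in>mV m n k. mw Pt m k j)" .
  have "bell_partial n k y = (\<Sum>j\<in>mV m n k. fact n / fact k * mw Pt m k j)"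
    unfolding bell_partial_def mV_def m_def[symmetric]
  proof (rule sum.cong[OF refl])
    fix j
    have "(\<Prod>i\<in>{1..m}. (y i / fact i) ^ j i) = (\<Prod>i\<in>{1..m}. (Pt $ i) ^ j i)"
      by (rule prod.cong) (auto simp: Pt_def)
    then show "fact n / (\<Prod>i\<in>{1..m}. fact (j i)) * (\<Prod>i\<in>{1..m}. (y i / fact i) ^ j i) =
         fact n / fact k * mw Pt m k j"
      unfolding mw_def by simp
  qed
  also have "\<dots> = fact n / fact k * (bfps y ^ k) $ n"
    unfolding eq by (simp add: sum_distrib_left)
  finally show ?thesis .
qed

definition yv :: "real \<Rightarrow> nat \<Rightarrow> real \<Rightarrow> real" where
  "yv c i x = ig_coeff i * c ^ i * (1 + c * x) powr (1/2 - real i)"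

definition Pf :: "real \<Rightarrow> real \<Rightarrow> real fps" where
  "Pf c x = bfps (\<lambda>i. yv c i x)"

definition phi :: "real \<Rightarrow> real \<Rightarrow> real \<Rightarrow> real" where
  "phi bt c x = exp (- bt * (sqrt (1 + c * x) - 1))"

definition Sm :: "real \<Rightarrow> real \<Rightarrow> nat \<Rightarrow> real \<Rightarrow> real" where
  "Sm bt c m x = (\<Sum>k\<le>m. (-bt) ^ k / fact k * (Pf c x ^ k) $ m)"

definition Dn :: "real \<Rightarrow> real \<Rightarrow> nat \<Rightarrow> real \<Rightarrow> real" where
  "Dn bt c m x = phi bt c x * fact m * Sm bt c m x"

lemma Pf_nth: "Pf c x $ i = (if i = 0 then 0 else yv c i x / fact i)"
  by (simp add: Pf_def bfps_nth)

lemma yv_deriv: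
  assumes "1 + c * x > 0" "i \<ge> 1"
  shows "((yv c i) has_real_derivative yv c (Suc i) x) (at x)"
proof -
  have d: "((\<lambda>x. 1 + c * x) has_real_derivative c) (at x)"
    by (auto intro!: derivative_eq_intros)
  have "((\<lambda>x. (1 + c * x) powr (1/2 - real i)) has_real_derivative
          (1/2 - real i) * (1 + c * x) powr (1/2 - real i - of_nat 1) * c) (at x)"
    by (rule DERIV_fun_powr[OF d assms(1)])
  then have "((\<lambda>x. ig_coeff i * c ^ i * (1 + c * x) powr (1/2 - real i)) has_real_derivative
          ig_coeff i * c ^ i * ((1/2 - real i) * (1 + c * x) powr (1/2 - real i - of_nat 1) * c)) (at x)"
    by (rule DERIV_cmult)
  moreover have "ig_coeff i * c ^ i * ((1/2 - real i) * (1 + c * x) powr (1/2 - real i - of_nat 1) * c) = yv c (Suc i) x"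
    unfolding yv_def ig_coeff_Suc[OF assms(2)] by (simp add: algebra_simps)
  moreover have "yv c i = (\<lambda>x. ig_coeff i * c ^ i * (1 + c * x) powr (1/2 - real i))"
    by (simp add: yv_def fun_eq_iff)
  ultimately show ?thesis by (simp only:)
qed

lemma yv_1: "1 + c * x > 0 \<Longrightarrow> yv c 1 x = c / (2 * sqrt (1 + c * x))"
  unfolding yv_def ig_coeff_1
  by (simp add: powr_minus_divide powr_half_sqrt[symmetric] powr_minus)

lemma phi_deriv:
  assumes "1 + c * x > 0"
  shows "((phi bt c) has_real_derivative (- bt * yv c 1 x * phi bt c x)) (at x)"
proof -
  have "((\<lambda>x. exp (- bt * (sqrt (1 + c * x) - 1))) has_real_derivative
        exp (- bt * (sqrt (1 + c * x) - 1)) * (- bt * (c / (2 * sqrt (1 + c * x))))) (at x)"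
    using assms by (auto intro!: derivative_eq_intros simp: field_simps)
  then show ?thesis unfolding phi_def[abs_def] yv_1[OF assms] using assms by (simp add: field_simps)
qed

lemma Pf_coeff_deriv:
  assumes "1 + c * x > 0"
  shows "((\<lambda>x. Pf c x $ i) has_real_derivative (fps_deriv (Pf c x) - fps_const (yv c 1 x)) $ i) (at x)"
proof (cases "i = 0")
  case True
  then show ?thesis by (simp add: Pf_nth)
next
  case False
  have "((\<lambda>x. yv c i x / fact i) has_real_derivative yv c (Suc i) x / fact i) (at x)"
    using yv_deriv[OF assms, of i] False by (intro DERIV_cdivide) (simp add: fun_eq_iff)
  moreover have "(fps_deriv (Pf c x) - fps_const (yv c 1 x)) $ i = yv c (Suc i) x / fact i"
    using False by (simp add: Pf_nth fact_Suc field_simps del: of_nat_Suc)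
  moreover have "(\<lambda>x. Pf c x $ i) = (\<lambda>x. yv c i x / fact i)"
    using False by (simp add: Pf_nth)
  ultimately show ?thesis by simp
qed

lemma Pf_0: "Pf c x $ 0 = 0" by (simp add: Pf_nth)

lemma Sm_ext:
  assumes "m \<le> N"
  shows "Sm bt c m x = (\<Sum>k\<le>N. (-bt) ^ k / fact k * (Pf c x ^ k) $ m)"
  unfolding Sm_def
  by (rule sum.mono_neutral_left) (use assms fps_pow_nth_low[OF Pf_0] in auto)

lemma fps_deriv_term:
  fixes P :: "real fps"
  shows "(of_nat k * P ^ (k - 1) * (fps_deriv P - fps_const y)) $ m =
         of_nat (Suc m) * (P ^ k) $ (Suc m) - of_nat k * y * (P ^ (k - 1)) $ m"
proof -
  have "of_nat k * P ^ (k - 1) * (fps_deriv P - fps_const y) =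
        fps_deriv (P ^ k) - fps_const (of_nat k * y) * P ^ (k - 1)"
    by (simp add: fps_deriv_power' algebra_simps fps_of_nat[symmetric] fps_const_mult[symmetric] del: fps_const_mult)
  then show ?thesis by simp
qed

lemma Sm_deriv:
  assumes "1 + c * x > 0"
  shows "((Sm bt c m) has_real_derivative
           (of_nat (Suc m) * Sm bt c (Suc m) x + bt * yv c 1 x * Sm bt c m x)) (at x)"
proof -
  let ?Q = "fps_deriv (Pf c x) - fps_const (yv c 1 x)"
  have eq: "Sm bt c m = (\<lambda>x. \<Sum>k\<le>Suc m. (-bt) ^ k / fact k * (Pf c x ^ k) $ m)"
    using Sm_ext[of m "Suc m"] by (simp add: fun_eq_iff)
  have "((\<lambda>x. \<Sum>k\<le>Suc m. (-bt) ^ k / fact k * (Pf c x ^ k) $ m) has_real_derivative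
         (\<Sum>k\<le>Suc m. (-bt) ^ k / fact k * (of_nat k * Pf c x ^ (k - 1) * ?Q) $ m)) (at x)"
    by (intro DERIV_sum DERIV_cmult fps_pow_deriv Pf_coeff_deriv assms)
  moreover have "(\<Sum>k\<le>Suc m. (-bt) ^ k / fact k * (of_nat k * Pf c x ^ (k - 1) * ?Q) $ m) =
     of_nat (Suc m) * Sm bt c (Suc m) x + bt * yv c 1 x * Sm bt c m x"
  proof -
    have "(\<Sum>k\<le>Suc m. (-bt) ^ k / fact k * (of_nat k * Pf c x ^ (k - 1) * ?Q) $ m) =
          (\<Sum>k\<le>Suc m. of_nat (Suc m) * ((-bt) ^ k / fact k * (Pf c x ^ k) $ (Suc m)))
        - (\<Sum>k\<le>Suc m. (-bt) ^ k / fact k * (of_nat k * yv c 1 x * (Pf c x ^ (k - 1)) $ m))"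
      unfolding fps_deriv_term sum_subtractf[symmetric]
      by (rule sum.cong[OF refl]) (simp only: right_diff_distrib mult.left_commute)
    also have "(\<Sum>k\<le>Suc m. of_nat (Suc m) * ((-bt) ^ k / fact k * (Pf c x ^ k) $ (Suc m))) =
               of_nat (Suc m) * Sm bt c (Suc m) x"
      unfolding Sm_def by (rule sum_distrib_left[symmetric])
    also have "(\<Sum>k\<le>Suc m. (-bt) ^ k / fact k * (of_nat k * yv c 1 x * (Pf c x ^ (k - 1)) $ m)) =
               (\<Sum>k\<le>m. (-bt) ^ (Suc k) / fact (Suc k) * (of_nat (Suc k) * yv c 1 x * (Pf c x ^ k) $ m))"
      by (subst sum.atMost_Suc_shift) simp
    also have "\<dots> = - bt * yv c 1 x * Sm bt c m x"
      unfolding Sm_def sum_distrib_left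
      by (rule sum.cong[OF refl]) (simp add: fact_Suc field_simps del: of_nat_Suc)
    finally show ?thesis by simp
  qed
  ultimately show ?thesis unfolding eq by simp
qed

lemma Dn_deriv:
  assumes "1 + c * x > 0"
  shows "((Dn bt c m) has_real_derivative Dn bt c (Suc m) x) (at x)"
proof -
  have "((\<lambda>x. phi bt c x * fact m * Sm bt c m x) has_real_derivative
     ((- bt * yv c 1 x * phi bt c x) * fact m + 0 * phi bt c x) * Sm bt c m x +
     (of_nat (Suc m) * Sm bt c (Suc m) x + bt * yv c 1 x * Sm bt c m x) * (phi bt c x * fact m)) (at x)"
    by (rule DERIV_mult[OF DERIV_mult[OF phi_deriv[OF assms] DERIV_const] Sm_deriv[OF assms]])
  moreover have "((- bt * yv c 1 x * phi bt c x) * fact m + 0 * phi bt c x) * Sm bt c m x +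
     (of_nat (Suc m) * Sm bt c (Suc m) x + bt * yv c 1 x * Sm bt c m x) * (phi bt c x * fact m)
     = Dn bt c (Suc m) x"
    unfolding Dn_def by (simp add: fact_Suc algebra_simps)
  moreover have "Dn bt c m = (\<lambda>x. phi bt c x * fact m * Sm bt c m x)"
    by (simp add: Dn_def fun_eq_iff)
  ultimately show ?thesis by (simp only:)
qed

lemma Dn_0: "Dn bt c 0 x = phi bt c x"
  by (simp add: Dn_def Sm_def)

definition En :: "real \<Rightarrow> real \<Rightarrow> nat \<Rightarrow> real \<Rightarrow> real" where
  "En bt c m x = (-1) ^ m * Dn bt c m x"

lemma En_0: "En bt c 0 x = phi bt c x"
  by (simp add: En_def Dn_0)

lemma En_deriv:
  assumes "1 + c * x > 0"
  shows "((En bt c m) has_real_derivative - En bt c (Suc m) x) (at x)"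
proof -
  have "((\<lambda>x. (-1) ^ m * Dn bt c m x) has_real_derivative (-1) ^ m * Dn bt c (Suc m) x) (at x)"
    by (rule DERIV_cmult[OF Dn_deriv[OF assms]])
  then show ?thesis by (simp add: En_def[abs_def])
qed

lemma En_nonneg:
  assumes "c \<ge> 0" "bt \<ge> 0" "1 + c * x > 0"
  shows "En bt c m x \<ge> 0"
proof -
  have sP: "(-1) ^ (i + 1) * Pf c x $ i \<ge> 0" for i
  proof (cases "i = 0")
    case True then show ?thesis by (simp add: Pf_nth)
  next
    case False
    have "(-1) ^ (i + 1) * Pf c x $ i = ((-1) ^ (i + 1) * ig_coeff i) * c ^ i * (1 + c * x) powr (1/2 - real i) / fact i"
      using False by (simp add: Pf_nth yv_def)
    also have "\<dots> \<ge> 0"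
    proof -
      have a: "0 \<le> (-1) ^ (i + 1) * ig_coeff i" using ig_coeff_sign[of i] False by simp
      have b: "0 \<le> c ^ i" using assms by simp
      have d: "0 \<le> (1 + c * x) powr (1/2 - real i)" by simp
      show ?thesis by (rule divide_nonneg_pos[OF mult_nonneg_nonneg[OF mult_nonneg_nonneg[OF a b] d]]) simp
    qed
    finally show ?thesis .
  qed
  have "En bt c m x = phi bt c x * fact m * (\<Sum>k\<le>m. bt ^ k / fact k * ((-1) ^ (m + k) * (Pf c x ^ k) $ m))"
    unfolding En_def Dn_def Sm_def sum_distrib_left
    by (simp add: power_add power_minus' algebra_simps sum_distrib_left)
  also have "\<dots> \<ge> 0"
  proof -
    have "0 \<le> bt ^ k / fact k * ((-1) ^ (m + k) * (Pf c x ^ k) $ m)" for k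
      by (rule mult_nonneg_nonneg) (use assms fps_pow_sign[OF Pf_0 sP, of m k] in auto)
    then have "0 \<le> (\<Sum>k\<le>m. bt ^ k / fact k * ((-1) ^ (m + k) * (Pf c x ^ k) $ m))"
      by (rule sum_nonneg)
    then show ?thesis by (simp add: phi_def)
  qed
  finally show ?thesis .
qed

lemma ig_sum_pdf_En:
  assumes "lam > 0" "mu > 0" "n \<ge> 1"
  shows "ig_sum_pdf lam mu n x =
    (if x > 0 then En (lam / mu) (2 * mu\<^sup>2 / lam) n x * x ^ (n - 1) / fact (n - 1) else 0)"
proof (cases "x > 0")
  case False then show ?thesis by (simp add: ig_sum_pdf_def)
next
  case True
  define c where "c = 2 * mu\<^sup>2 / lam"
  define bt where "bt = lam / mu"
  have c: "c > 0" using assms by (simp add: c_def)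
  have G: "Gamma (real n) = fact (n - 1)"
    using Gamma_fact[of "n - 1"] assms by (simp add: of_nat_diff)
  have "(\<Sum>k=1..n. (-1) ^ (n + k) * bt ^ k * phi bt c x * ig_u lam mu n k x)
      = (\<Sum>k=1..n. (-1) ^ n * (phi bt c x * fact n * ((-bt) ^ k / fact k * (Pf c x ^ k) $ n)))"
  proof (rule sum.cong[OF refl])
    fix k assume k: "k \<in> {1..n}"
    have "ig_u lam mu n k x = fact n / fact k * (Pf c x ^ k) $ n"
      unfolding ig_u_def Let_def c_def[symmetric] Pf_def
      using bell_partial_fps[of k n] k by (simp add: yv_def)
    then show "(-1) ^ (n + k) * bt ^ k * phi bt c x * ig_u lam mu n k x =
          (-1) ^ n * (phi bt c x * fact n * ((-bt) ^ k / fact k * (Pf c x ^ k) $ n))"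
      by (simp add: power_add power_minus' algebra_simps)
  qed
  also have "\<dots> = (-1) ^ n * (phi bt c x * fact n * (\<Sum>k=1..n. ((-bt) ^ k / fact k * (Pf c x ^ k) $ n)))"
    by (simp add: sum_distrib_left)
  also have "(\<Sum>k=1..n. ((-bt) ^ k / fact k * (Pf c x ^ k) $ n)) = Sm bt c n x"
  proof -
    have "{..n} = insert 0 {1..n}" by auto
    then have "Sm bt c n x = (-bt) ^ 0 / fact 0 * (Pf c x ^ 0) $ n + (\<Sum>k=1..n. ((-bt) ^ k / fact k * (Pf c x ^ k) $ n))"
      unfolding Sm_def by (simp add: sum.insert)
    then show ?thesis using assms by simp
  qed
  finally have eq: "(\<Sum>k=1..n. (-1) ^ (n + k) * bt ^ k * phi bt c x * ig_u lam mu n k x) = En bt c n x"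
    unfolding En_def Dn_def by simp
  have "ig_sum_pdf lam mu n x = x ^ (n - 1) / fact (n - 1) * (\<Sum>k=1..n. (-1) ^ (n + k) * bt ^ k * phi bt c x * ig_u lam mu n k x)"
    using True unfolding ig_sum_pdf_def Let_def c_def[symmetric] bt_def[symmetric] G phi_def
    by (simp add: mult.assoc)
  then show ?thesis using True eq by (simp add: c_def bt_def)
qed




lemma half_at_top: "filterlim (\<lambda>x::real. x / 2) at_top at_top"
  unfolding filterlim_at_top
proof
  fix Z :: real
  show "\<forall>\<^sub>F x in at_top. Z \<le> x / 2"
    using eventually_ge_at_top[of "2 * Z"] by eventually_elim simp
qed

lemma shift_at_top: "filterlim (\<lambda>x::real. B + x) at_top at_top"
  unfolding filterlim_at_top
proof
  fix Z :: real
  show "\<forall>\<^sub>F x in at_top. Z \<le> B + x"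
    using eventually_ge_at_top[of "Z - B"] by eventually_elim simp
qed

lemma phi_lim_aux:
  fixes c bt :: real
  assumes "c > 0" "bt > 0"
  shows "((\<lambda>x. exp (- bt * (sqrt (1 + c * x) - 1))) \<longlongrightarrow> 0) at_top"
proof -
  have "filterlim (\<lambda>x. - bt * (sqrt (1 + c * x) - 1)) at_bot at_top"
    unfolding filterlim_at_bot
  proof
    fix Z :: real
    define W where "W = 1 + \<bar>Z\<bar> / bt"
    have W: "W \<ge> 1" using assms by (simp add: W_def)
    show "\<forall>\<^sub>F x in at_top. - bt * (sqrt (1 + c * x) - 1) \<le> Z"
      using eventually_ge_at_top[of "W\<^sup>2 / c"]
    proof eventually_elim
      fix x assume x: "W\<^sup>2 / c \<le> x"
      then have "W\<^sup>2 \<le> c * x" using assms by (simp add: field_simps)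
      then have "W\<^sup>2 \<le> 1 + c * x" by simp
      then have "sqrt (W\<^sup>2) \<le> sqrt (1 + c * x)" by (rule real_sqrt_le_mono)
      then have "W \<le> sqrt (1 + c * x)" using W by simp
      then have "\<bar>Z\<bar> / bt \<le> sqrt (1 + c * x) - 1" by (simp add: W_def)
      then have "\<bar>Z\<bar> \<le> bt * (sqrt (1 + c * x) - 1)" using assms by (simp add: field_simps)
      then show "- bt * (sqrt (1 + c * x) - 1) \<le> Z" by linarith
    qed
  qed
  from filterlim_compose[OF exp_at_bot this] show ?thesis by (simp add: o_def)
qed

lemma phi_lim:
  assumes "c > 0" "bt > 0"
  shows "((phi bt c) \<longlongrightarrow> 0) at_top"
  unfolding phi_def[abs_def] using phi_lim_aux[OF assms] .

lemma En_mono: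
  assumes "c > 0" "bt > 0" "0 \<le> y" "y \<le> x"
  shows "En bt c m x \<le> En bt c m y"
proof (rule DERIV_nonpos_imp_nonincreasing[OF assms(4)])
  fix t assume t: "y \<le> t" "t \<le> x"
  then have "1 + c * t > 0" using assms by (simp add: add_pos_nonneg)
  then show "\<exists>d. (En bt c m has_real_derivative d) (at t) \<and> d \<le> 0"
    using En_deriv En_nonneg assms by (metis less_imp_le neg_le_0_iff_le)
qed

lemma En_lim:
  assumes "c > 0" "bt > 0"
  shows "((\<lambda>x. x ^ m * En bt c m x) \<longlongrightarrow> 0) at_top"
proof (induction m)
  case 0
  then show ?case using phi_lim[OF assms] by (simp add: En_0[abs_def])
next
  case (Suc m)
  have comp: "((\<lambda>x. (x/2) ^ m * En bt c m (x/2)) \<longlongrightarrow> 0) at_top"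
    using filterlim_compose[OF Suc.IH half_at_top] by (simp add: o_def)
  have up: "((\<lambda>x. 2 ^ Suc m * ((x/2) ^ m * En bt c m (x/2))) \<longlongrightarrow> 0) at_top"
    using tendsto_mult_right_zero[OF comp] by simp
  show ?case
  proof (rule tendsto_sandwich[OF _ _ tendsto_const up])
    show "\<forall>\<^sub>F x in at_top. 0 \<le> x ^ Suc m * En bt c (Suc m) x"
      using eventually_ge_at_top[of 0]
      by eventually_elim (use assms in \<open>auto intro!: mult_nonneg_nonneg En_nonneg simp: add_pos_nonneg\<close>)
    show "\<forall>\<^sub>F x in at_top. x ^ Suc m * En bt c (Suc m) x \<le> 2 ^ Suc m * ((x/2) ^ m * En bt c m (x/2))"
      using eventually_gt_at_top[of 0]
    proof eventually_elim
      fix x :: real assume x: "x > 0"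
      have d: "\<And>t. x/2 \<le> t \<Longrightarrow> t \<le> x \<Longrightarrow> (En bt c m has_real_derivative - En bt c (Suc m) t) (at t)"
        using x assms by (auto intro!: En_deriv simp: add_pos_nonneg)
      from MVT2[of "x/2" x, OF _ d] x obtain z where z: "x/2 < z" "z < x"
        "En bt c m x - En bt c m (x/2) = (x - x/2) * (- En bt c (Suc m) z)" by auto
      have "En bt c (Suc m) x \<le> En bt c (Suc m) z"
        using En_mono[OF assms, of z x] z x by simp
      then have "(x/2) * En bt c (Suc m) x \<le> (x/2) * En bt c (Suc m) z"
        using x by (intro mult_left_mono) auto
      then have "(x/2) * En bt c (Suc m) x \<le> En bt c m (x/2) - En bt c m x"
        using z(3) by (simp add: algebra_simps)
      also have "\<dots> \<le> En bt c m (x/2)"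
        using En_nonneg[of c bt x m] assms x by (simp add: add_pos_nonneg)
      finally have *: "(x/2) * En bt c (Suc m) x \<le> En bt c m (x/2)" .
      have "x ^ Suc m * En bt c (Suc m) x = 2 * x ^ m * ((x/2) * En bt c (Suc m) x)"
        by (simp add: algebra_simps)
      also have "\<dots> \<le> 2 * x ^ m * En bt c m (x/2)"
        using * x by (intro mult_left_mono) auto
      also have "\<dots> = 2 ^ Suc m * ((x/2) ^ m * En bt c m (x/2))"
        by (simp add: power_divide)
      finally show "x ^ Suc m * En bt c (Suc m) x \<le> 2 ^ Suc m * ((x/2) ^ m * En bt c m (x/2))" .
    qed
  qed
qed




definition Eh :: "real \<Rightarrow> real \<Rightarrow> nat \<Rightarrow> real \<Rightarrow> real" where
  "Eh bt c m t = En bt c m (max t 0)"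

lemma En_isCont:
  assumes "c > 0" "t \<ge> 0"
  shows "isCont (En bt c m) t"
proof -
  have "1 + c * t > 0" using assms by (simp add: add_pos_nonneg)
  then show ?thesis using En_deriv DERIV_isCont by blast
qed

lemma Eh_cont: assumes "c > 0" shows "continuous_on UNIV (Eh bt c m)"
proof (rule continuous_at_imp_continuous_on, intro ballI)
  fix t :: real
  have "isCont (\<lambda>t. max t 0) t" by (intro continuous_intros)
  moreover have "isCont (En bt c m) (max t 0)" by (rule En_isCont[OF assms]) simp
  ultimately show "isCont (Eh bt c m) t"
    unfolding Eh_def[abs_def] by (rule isCont_o2)
qed

lemma Eh_borel[measurable]: assumes "c > 0" shows "Eh bt c m \<in> borel_measurable borel"
  by (rule borel_measurable_continuous_onI[OF Eh_cont[OF assms]])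

lemma Eh_eq: "t \<ge> 0 \<Longrightarrow> Eh bt c m t = En bt c m t"
  by (simp add: Eh_def)

lemma En_integral:
  assumes c: "c > 0" and bt: "bt > 0" and B: "B \<ge> 0" and n: "n \<ge> 1"
  shows "(\<integral>\<^sup>+ u. ennreal (Eh bt c n (B + u) * u ^ (n - 1) / fact (n - 1)) * indicator {0<..} u \<partial>lborel)
         = ennreal (En bt c 0 B)"
proof -
  define H where "H u = (\<Sum>m<n. u ^ m / fact m * En bt c m (B + u))" for u
  define f where "f u = Eh bt c n (B + u) * u ^ (n - 1) / fact (n - 1)" for u
  define a where "a m u = (if m = 0 then 0 else u ^ (m - 1) / fact (m - 1) * En bt c m (B + u))" for m u
  have f_borel: "f \<in> borel_measurable borel" unfolding f_def using c by measurable
  have dterm: "((\<lambda>u. u ^ m / fact m * En bt c m (B + u)) has_real_derivative a m u - a (Suc m) u) (at u)"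
    if u: "u \<ge> 0" for m u
  proof -
    have d1: "((\<lambda>u. u ^ m / fact m) has_real_derivative (of_nat m * u ^ (m - 1)) / fact m) (at u)"
      using DERIV_pow[of m u] by (intro DERIV_cdivide) simp
    have "1 + c * (B + u) > 0" using c B u by (simp add: add_pos_nonneg)
    from DERIV_chain2[OF En_deriv[OF this] DERIV_add[OF DERIV_const DERIV_ident]]
    have d2: "((\<lambda>u. En bt c m (B + u)) has_real_derivative - En bt c (Suc m) (B + u)) (at u)"
      by simp
    have "((\<lambda>u. u ^ m / fact m * En bt c m (B + u)) has_real_derivative
          (of_nat m * u ^ (m - 1)) / fact m * En bt c m (B + u) + (- En bt c (Suc m) (B + u)) * (u ^ m / fact m)) (at u)"
      by (rule DERIV_mult[OF d1 d2])
    moreover have "(of_nat m * u ^ (m - 1)) / fact m * En bt c m (B + u) + (- En bt c (Suc m) (B + u)) * (u ^ m / fact m)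
        = a m u - a (Suc m) u"
    proof (cases m)
      case 0 then show ?thesis by (simp add: a_def)
    next
      case (Suc k) then show ?thesis by (simp add: a_def fact_Suc field_simps del: of_nat_Suc)
    qed
    ultimately show ?thesis by simp
  qed
  have dH: "((\<lambda>u. - H u) has_real_derivative f u) (at u)" if u: "0 \<le> u" for u
  proof -
    have "(H has_real_derivative (\<Sum>m<n. a m u - a (Suc m) u)) (at u)"
      unfolding H_def[abs_def] by (intro DERIV_sum dterm u)
    moreover have "(\<Sum>m<n. a m u - a (Suc m) u) = - f u"
      using sum_lessThan_telescope'[of "\<lambda>m. a m u" n] n u
      by (simp add: a_def f_def Eh_eq B)
    ultimately show ?thesis using DERIV_minus by fastforce
  qed
  have fnn: "0 \<le> f u" if "0 \<le> u" for u
    unfolding f_def using that B c bt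
    by (auto intro!: divide_nonneg_pos mult_nonneg_nonneg En_nonneg simp: Eh_eq add_pos_nonneg)
  have lim: "((\<lambda>u. - H u) \<longlongrightarrow> 0) at_top"
  proof -
    have "((\<lambda>u. u ^ m / fact m * En bt c m (B + u)) \<longlongrightarrow> 0) at_top" for m
    proof (rule tendsto_sandwich[OF _ _ tendsto_const])
      have shift: "filterlim (\<lambda>u. B + u) at_top at_top" by (rule shift_at_top)
      have "((\<lambda>u. (B + u) ^ m * En bt c m (B + u)) \<longlongrightarrow> 0) at_top"
        using filterlim_compose[OF En_lim[OF c bt, of m] shift] by (simp add: o_def)
      then show "((\<lambda>u. (B + u) ^ m * En bt c m (B + u) / fact m) \<longlongrightarrow> 0) at_top"
        using tendsto_divide_zero by blast
      show "\<forall>\<^sub>F u in at_top. 0 \<le> u ^ m / fact m * En bt c m (B + u)"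
        using eventually_ge_at_top[of 0]
        by eventually_elim (use B c bt in \<open>auto intro!: divide_nonneg_pos mult_nonneg_nonneg En_nonneg simp: add_pos_nonneg\<close>)
      show "\<forall>\<^sub>F u in at_top. u ^ m / fact m * En bt c m (B + u) \<le> (B + u) ^ m * En bt c m (B + u) / fact m"
        using eventually_ge_at_top[of 0]
      proof eventually_elim
        fix u :: real assume u: "0 \<le> u"
        have "u ^ m \<le> (B + u) ^ m" using u B by (intro power_mono) auto
        moreover have "0 \<le> En bt c m (B + u)" using u B c bt by (intro En_nonneg) (auto simp: add_pos_nonneg)
        ultimately show "u ^ m / fact m * En bt c m (B + u) \<le> (B + u) ^ m * En bt c m (B + u) / fact m"
          by (simp add: divide_right_mono mult_right_mono)
      qed
    qed
    then have "(H \<longlongrightarrow> 0) at_top" unfolding H_def[abs_def] by (intro tendsto_null_sum) auto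
    then show ?thesis using tendsto_minus by fastforce
  qed
  have "(\<integral>\<^sup>+ u. ennreal (f u) * indicator {0..} u \<partial>lborel) = 0 - (- H 0)"
    by (rule nn_integral_FTC_atLeast[OF f_borel dH fnn lim])
  also have "H 0 = En bt c 0 B"
  proof -
    obtain k where k: "n = Suc k" using n by (cases n) auto
    show ?thesis unfolding H_def k sum.lessThan_Suc_shift by simp
  qed
  finally have *: "(\<integral>\<^sup>+ u. ennreal (f u) * indicator {0..} u \<partial>lborel) = En bt c 0 B" by simp
  have "(\<integral>\<^sup>+ u. ennreal (f u) * indicator {0<..} u \<partial>lborel) = (\<integral>\<^sup>+ u. ennreal (f u) * indicator {0..} u \<partial>lborel)"
    by (rule nn_integral_cong_AE) (use AE_lborel_singleton[of 0] in \<open>auto elim!: eventually_mono split: split_indicator\<close>)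
  then show ?thesis using * unfolding f_def by simp
qed




lemma poly_interval_integral:
  assumes "r \<ge> 1" "v > 0"
  shows "(\<integral>\<^sup>+ u. ennreal (u ^ (r - 1) / fact (r - 1)) * indicator {0<..<v} u \<partial>lborel) = ennreal (v ^ r / fact r)"
proof -
  have d: "((\<lambda>u. u ^ r / fact r) has_real_derivative u ^ (r - 1) / fact (r - 1)) (at u)" for u :: real
  proof -
    have "((\<lambda>u. u ^ r / fact r) has_real_derivative (real r * u ^ (r - 1)) / fact r) (at u)"
      using DERIV_pow[of r u] by (intro DERIV_cdivide) simp
    moreover have "(real r * u ^ (r - 1)) / fact r = u ^ (r - 1) / fact (r - 1)"
    proof -
      obtain k where k: "r = Suc k" using assms by (cases r) auto
      show ?thesis unfolding k by (simp add: fact_Suc field_simps del: of_nat_Suc)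
    qed
    ultimately show ?thesis by simp
  qed
  have "(\<integral>\<^sup>+ u. ennreal (u ^ (r - 1) / fact (r - 1)) * indicator {0..v} u \<partial>lborel) = ennreal (v ^ r / fact r - 0 ^ r / fact r)"
    by (rule nn_integral_FTC_Icc) (use d assms in auto)
  also have "v ^ r / fact r - 0 ^ r / fact r = v ^ r / fact r" using assms by simp
  finally have *: "(\<integral>\<^sup>+ u. ennreal (u ^ (r - 1) / fact (r - 1)) * indicator {0..v} u \<partial>lborel) = ennreal (v ^ r / fact r)" .
  have "AE u in lborel. u \<noteq> 0 \<and> u \<noteq> v"
    using AE_lborel_singleton[of "0::real"] AE_lborel_singleton[of v] by eventually_elim auto
  then have "(\<integral>\<^sup>+ u. ennreal (u ^ (r - 1) / fact (r - 1)) * indicator {0<..<v} u \<partial>lborel) =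
        (\<integral>\<^sup>+ u. ennreal (u ^ (r - 1) / fact (r - 1)) * indicator {0..v} u \<partial>lborel)"
    by (intro nn_integral_cong_AE, eventually_elim) (auto split: split_indicator)
  then show ?thesis using * by simp
qed

lemma pred_gt_pair[measurable]: "Measurable.pred (borel \<Otimes>\<^sub>M borel) (\<lambda>x::real\<times>real. snd x \<in> {fst x<..})"
  unfolding greaterThan_iff by measurable

lemma FS:
  fixes F :: "real \<Rightarrow> ennreal" and b :: "nat \<Rightarrow> real"
  assumes "finite N" "N \<noteq> {}" "F \<in> borel_measurable borel"
  shows "(\<integral>\<^sup>+ z. F (\<Sum>j\<in>N. z j) * indicator {z. \<forall>j\<in>N. b j < z j} z \<partial>PiM N (\<lambda>_. lborel)) =
         (\<integral>\<^sup>+ u. F ((\<Sum>j\<in>N. b j) + u) * ennreal (u ^ (card N - 1) / fact (card N - 1)) * indicator {0<..} u \<partial>lborel)"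
  using assms
proof (induction N arbitrary: F rule: finite_ne_induct)
  case (singleton i)
  interpret product_sigma_finite "\<lambda>_. lborel" by standard
  have [measurable]: "F \<in> borel_measurable borel" by fact
  have "(\<integral>\<^sup>+ z. F (\<Sum>j\<in>{i}. z j) * indicator {z. \<forall>j\<in>{i}. b j < z j} z \<partial>PiM {i} (\<lambda>_. lborel)) =
        (\<integral>\<^sup>+ z. (\<lambda>y. F y * indicator {b i<..} y) (z i) \<partial>PiM {i} (\<lambda>_. lborel))"
    by (intro nn_integral_cong) (auto split: split_indicator)
  also have "\<dots> = (\<integral>\<^sup>+ y. F y * indicator {b i<..} y \<partial>lborel)"
    by (rule product_nn_integral_singleton) measurable
  also have "\<dots> = (\<integral>\<^sup>+ u. F (b i + u) * indicator {b i<..} (b i + u) \<partial>lborel)"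
    using nn_integral_real_affine[of "\<lambda>y. F y * indicator {b i<..} y" 1 "b i"] by simp
  also have "\<dots> = (\<integral>\<^sup>+ u. F ((\<Sum>j\<in>{i}. b j) + u) * ennreal (u ^ (card {i} - 1) / fact (card {i} - 1)) * indicator {0<..} u \<partial>lborel)"
    by (intro nn_integral_cong) (auto split: split_indicator)
  finally show ?case .
next
  case (insert i N)
  interpret product_sigma_finite "\<lambda>_. lborel" by standard
  have [measurable]: "F \<in> borel_measurable borel" by fact
  have finN: "finite N" by fact
  define r where "r = card N"
  have r1: "r \<ge> 1" using insert.hyps by (simp add: r_def Suc_le_eq card_gt_0_iff)
  have cardI: "card (insert i N) - 1 = r" using insert.hyps by (simp add: r_def)
  define G where "G v = (\<integral>\<^sup>+ y. F (y + v) * indicator {b i<..} y \<partial>lborel)" for v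
  have G_borel[measurable]: "G \<in> borel_measurable borel"
    unfolding G_def by measurable
  have "(\<integral>\<^sup>+ z. F (\<Sum>j\<in>insert i N. z j) * indicator {z. \<forall>j\<in>insert i N. b j < z j} z \<partial>PiM (insert i N) (\<lambda>_. lborel))
      = (\<integral>\<^sup>+ x. \<integral>\<^sup>+ y. F (\<Sum>j\<in>insert i N. (x(i := y)) j) * indicator {z. \<forall>j\<in>insert i N. b j < z j} (x(i := y)) \<partial>lborel \<partial>PiM N (\<lambda>_. lborel))"
    by (rule product_nn_integral_insert) (use insert.hyps in measurable)
  also have "\<dots> = (\<integral>\<^sup>+ x. G (\<Sum>j\<in>N. x j) * indicator {z. \<forall>j\<in>N. b j < z j} x \<partial>PiM N (\<lambda>_. lborel))"
  proof (rule nn_integral_cong)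
    fix x :: "nat \<Rightarrow> real" assume x: "x \<in> space (PiM N (\<lambda>_. lborel))"
    have s: "(\<Sum>j\<in>insert i N. (x(i := y)) j) = y + (\<Sum>j\<in>N. x j)"
      for y :: real using insert.hyps by (simp add: sum.insert) (intro sum.cong, auto)
    have ind: "indicator {z. \<forall>j\<in>insert i N. b j < z j} (x(i := y)) =
        (indicator {b i<..} y * indicator {z. \<forall>j\<in>N. b j < z j} x :: ennreal)" for y :: real
      using insert.hyps by (auto split: split_indicator)
    show "(\<integral>\<^sup>+ y. F (\<Sum>j\<in>insert i N. (x(i := y)) j) * indicator {z. \<forall>j\<in>insert i N. b j < z j} (x(i := y)) \<partial>lborel)
        = G (\<Sum>j\<in>N. x j) * indicator {z. \<forall>j\<in>N. b j < z j} x"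
      unfolding s ind G_def
      by (subst nn_integral_multc[symmetric]) (measurable, simp add: mult.assoc)
  qed
  also have "\<dots> = (\<integral>\<^sup>+ u. G ((\<Sum>j\<in>N. b j) + u) * ennreal (u ^ (r - 1) / fact (r - 1)) * indicator {0<..} u \<partial>lborel)"
    unfolding r_def by (rule insert.IH) measurable
  also have "\<dots> = (\<integral>\<^sup>+ u. \<integral>\<^sup>+ v. F ((\<Sum>j\<in>insert i N. b j) + v) * ennreal (u ^ (r - 1) / fact (r - 1)) * indicator {0<..} u * indicator {u<..} v \<partial>lborel \<partial>lborel)"
  proof (rule nn_integral_cong)
    fix u :: real
    have "G ((\<Sum>j\<in>N. b j) + u) = (\<integral>\<^sup>+ w. F (b i + w + ((\<Sum>j\<in>N. b j) + u)) * indicator {b i<..} (b i + w) \<partial>lborel)"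
      unfolding G_def using nn_integral_real_affine[of "\<lambda>y. F (y + ((\<Sum>j\<in>N. b j) + u)) * indicator {b i<..} y" 1 "b i"]
      by simp
    also have "\<dots> = (\<integral>\<^sup>+ w. F ((\<Sum>j\<in>insert i N. b j) + u + w) * indicator {0<..} w \<partial>lborel)"
      using insert.hyps by (intro nn_integral_cong) (auto simp: sum.insert algebra_simps split: split_indicator)
    also have "\<dots> = (\<integral>\<^sup>+ v. F ((\<Sum>j\<in>insert i N. b j) + u + (- u + v)) * indicator {0<..} (- u + v) \<partial>lborel)"
      using nn_integral_real_affine[of "\<lambda>w. F ((\<Sum>j\<in>insert i N. b j) + u + w) * indicator {0<..} w" 1 "- u"]
      by simp
    also have "\<dots> = (\<integral>\<^sup>+ v. F ((\<Sum>j\<in>insert i N. b j) + v) * indicator {u<..} v \<partial>lborel)"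
      by (intro nn_integral_cong) (auto split: split_indicator)
    finally have g: "G ((\<Sum>j\<in>N. b j) + u) = (\<integral>\<^sup>+ v. F ((\<Sum>j\<in>insert i N. b j) + v) * indicator {u<..} v \<partial>lborel)" .
    show "G ((\<Sum>j\<in>N. b j) + u) * ennreal (u ^ (r - 1) / fact (r - 1)) * indicator {0<..} u =
      (\<integral>\<^sup>+ v. F ((\<Sum>j\<in>insert i N. b j) + v) * ennreal (u ^ (r - 1) / fact (r - 1)) * indicator {0<..} u * indicator {u<..} v \<partial>lborel)"
      unfolding g
      by (subst nn_integral_multc[symmetric], measurable)+ (simp add: mult_ac)
  qed
  also have "\<dots> = (\<integral>\<^sup>+ v. \<integral>\<^sup>+ u. F ((\<Sum>j\<in>insert i N. b j) + v) * ennreal (u ^ (r - 1) / fact (r - 1)) * indicator {0<..} u * indicator {u<..} v \<partial>lborel \<partial>lborel)"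
    by (rule lborel_pair.Fubini'[symmetric]) measurable
  also have "\<dots> = (\<integral>\<^sup>+ v. F ((\<Sum>j\<in>insert i N. b j) + v) * ennreal (v ^ r / fact r) * indicator {0<..} v \<partial>lborel)"
  proof (rule nn_integral_cong)
    fix v :: real
    have "(\<integral>\<^sup>+ u. F ((\<Sum>j\<in>insert i N. b j) + v) * ennreal (u ^ (r - 1) / fact (r - 1)) * indicator {0<..} u * indicator {u<..} v \<partial>lborel)
        = F ((\<Sum>j\<in>insert i N. b j) + v) * (\<integral>\<^sup>+ u. ennreal (u ^ (r - 1) / fact (r - 1)) * indicator {0<..<v} u \<partial>lborel)"
      by (subst nn_integral_cmult[symmetric], measurable)
         (intro nn_integral_cong, auto simp: mult_ac split: split_indicator)
    also have "\<dots> = F ((\<Sum>j\<in>insert i N. b j) + v) * ennreal (v ^ r / fact r) * indicator {0<..} v"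
    proof (cases "v > 0")
      case True then show ?thesis using poly_interval_integral[OF r1 True] by simp
    next
      case False
      then have "{0<..<v} = {}" by auto
      then show ?thesis using False by simp
    qed
    finally show "(\<integral>\<^sup>+ u. F ((\<Sum>j\<in>insert i N. b j) + v) * ennreal (u ^ (r - 1) / fact (r - 1)) * indicator {0<..} u * indicator {u<..} v \<partial>lborel)
        = F ((\<Sum>j\<in>insert i N. b j) + v) * ennreal (v ^ r / fact r) * indicator {0<..} v" .
  qed
  finally show ?case unfolding cardI .
qed




definition rect :: "nat set \<Rightarrow> (nat \<Rightarrow> real) \<Rightarrow> (nat \<Rightarrow> real) set" where
  "rect N a = {f \<in> (\<Pi>\<^sub>E i\<in>N. UNIV). \<forall>i\<in>N. a i < f i}"

lemma sets_PiM_rect: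
  assumes "finite N"
  shows "sets (PiM N (\<lambda>_. lborel::real measure)) = sigma_sets (\<Pi>\<^sub>E i\<in>N. UNIV) (range (rect N))"
proof -
  let ?P = "{{f\<in>(\<Pi>\<^sub>E i\<in>N. (UNIV::real set)). \<forall>i\<in>j. f i \<in> A i} | A j. j \<in> {N} \<and> A \<in> Pi j (\<lambda>_. range greaterThan)}"
  have "sets (PiM N (\<lambda>_. lborel::real measure)) = sets (PiM N (\<lambda>_. sigma UNIV (range greaterThan) :: real measure))"
    by (rule sets_PiM_cong) (auto simp: borel_Ioi)
  also have "\<dots> = sets (sigma (\<Pi>\<^sub>E i\<in>N. UNIV) ?P)"
  proof (rule sets_PiM_sigma)
    show "\<exists>S\<subseteq>range greaterThan. countable S \<and> (UNIV::real set) = \<Union>S"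
    proof (intro exI conjI)
      show "range (\<lambda>k::nat. {- real k<..}) \<subseteq> range greaterThan" by auto
      show "countable (range (\<lambda>k::nat. {- real k<..}))" by simp
      show "(UNIV::real set) = \<Union>(range (\<lambda>k::nat. {- real k<..}))"
      proof safe
        fix x :: real
        obtain k :: nat where "- x < real k" using reals_Archimedean2 by blast
        then show "x \<in> \<Union>(range (\<lambda>k::nat. {- real k<..}))" by (intro UN_I[of k]) auto
      qed auto
    qed
  qed (use assms in auto)
  also have "\<dots> = sigma_sets (\<Pi>\<^sub>E i\<in>N. UNIV) ?P"
    by (rule sets_measure_of) auto
  also have "?P = range (rect N)"
  proof (intro equalityI subsetI)
    fix X assume "X \<in> ?P"
    then obtain A j where X: "X = {f\<in>(\<Pi>\<^sub>E i\<in>N. UNIV). \<forall>i\<in>j. f i \<in> A i}" and j: "j \<in> {N}"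
      and A: "A \<in> Pi j (\<lambda>_. range greaterThan)" by blast
    then have "\<forall>i\<in>N. \<exists>a. A i = {a<..}" by auto
    then obtain a where a: "\<forall>i\<in>N. A i = {a i<..}" by metis
    show "X \<in> range (rect N)"
      using a j unfolding X by (intro image_eqI[of _ _ a]) (auto simp: rect_def)
  next
    fix X assume "X \<in> range (rect N)"
    then obtain a where X: "X = rect N a" by auto
    show "X \<in> ?P" unfolding X
      by (intro CollectI exI[of _ "\<lambda>i. {a i<..}"] exI[of _ N]) (auto simp: rect_def)
  qed
  finally show ?thesis .
qed

lemma rect_sets: "finite N \<Longrightarrow> rect N a \<in> sets (PiM N (\<lambda>_. lborel::real measure))"
  using sets_PiM_rect[of N] by auto

theorem theorem9:
  fixes M :: "'a measure" and X :: "nat \<Rightarrow> 'a \<Rightarrow> real"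
    and lam mu :: real and n :: nat
  assumes "prob_space M"
    and "lam > 0" and "mu > 0" and "n \<ge> 1"
    and "\<And>i. i < n \<Longrightarrow> X i \<in> borel_measurable M"
    and "\<And>x :: nat \<Rightarrow> real. (\<forall>j<n. x j \<ge> 0) \<Longrightarrow>
           measure M {\<omega> \<in> space M. \<forall>j<n. X j \<omega> > x j} =
           exp (- (lam / mu) * (sqrt (1 + 2 * mu\<^sup>2 / lam * (\<Sum>j<n. x j)) - 1))"
  shows "distributed M lborel (\<lambda>\<omega>. \<Sum>i<n. X i \<omega>)
           (\<lambda>x. ennreal (ig_sum_pdf lam mu n x))"
proof -
  interpret P: prob_space M by fact
  define bt where "bt = lam / mu"
  define c where "c = 2 * mu\<^sup>2 / lam"
  have c: "c > 0" and bt: "bt > 0" using assms by (auto simp: c_def bt_def)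
  define N where "N = {..<n}"
  have finN: "finite N" and cardN: "card N = n" by (auto simp: N_def)
  have "0 \<in> N" using assms(4) by (simp add: N_def)
  then have Nne: "N \<noteq> {}" by auto
  let ?Mp = "PiM N (\<lambda>_. lborel :: real measure)"
  define Xv where "Xv \<omega> = (\<lambda>j\<in>N. X j \<omega>)" for \<omega>
  have Xv_meas: "Xv \<in> measurable M ?Mp"
    unfolding Xv_def by (rule measurable_restrict) (use assms(5) in \<open>auto simp: N_def\<close>)
  have Xmeas[measurable]: "X j \<in> borel_measurable M" if "j \<in> N" for j
    using assms(5) that by (auto simp: N_def)
  have surv: "P.prob {\<omega>\<in>space M. \<forall>j<n. X j \<omega> > x j} = phi bt c (\<Sum>j<n. x j)"
    if "\<forall>j<n. x j \<ge> 0" for x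
    using assms(6)[OF that] by (simp add: phi_def bt_def c_def)
  have AEpos: "AE \<omega> in M. \<forall>j<n. X j \<omega> > 0"
  proof -
    have "P.prob {\<omega>\<in>space M. \<forall>j<n. X j \<omega> > 0} = 1"
      using surv[of "\<lambda>_. 0"] by (simp add: phi_def)
    from P.AE_prob_1[OF this] show ?thesis by eventually_elim auto
  qed
  define g where "g z = ennreal (Eh bt c n (\<Sum>j\<in>N. z j)) * indicator {z. \<forall>j\<in>N. 0 < z j} z" for z :: "nat \<Rightarrow> real"
  have g_meas: "g \<in> borel_measurable ?Mp"
    unfolding g_def using finN c by measurable
  have rect_eq: "emeasure (distr M ?Mp Xv) (rect N a) = emeasure (density ?Mp g) (rect N a)" for a
  proof -
    define ap where "ap j = max (a j) 0" for j
    have "emeasure (distr M ?Mp Xv) (rect N a) = emeasure M {\<omega>\<in>space M. \<forall>j<n. a j < X j \<omega>}"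
    proof -
      have "Xv -` rect N a \<inter> space M = {\<omega>\<in>space M. \<forall>j<n. a j < X j \<omega>}"
        by (auto simp: Xv_def rect_def N_def)
      then show ?thesis by (simp add: emeasure_distr[OF Xv_meas rect_sets[OF finN]])
    qed
    also have "\<dots> = emeasure M {\<omega>\<in>space M. \<forall>j<n. ap j < X j \<omega>}"
    proof (rule emeasure_Collect_eq_AE)
      show "AE \<omega> in M. (\<forall>j<n. a j < X j \<omega>) = (\<forall>j<n. ap j < X j \<omega>)"
        using AEpos by eventually_elim (auto simp: ap_def)
      show "Measurable.pred M (\<lambda>\<omega>. \<forall>j<n. ap j < X j \<omega>)" using assms(5) by measurable
      show "Measurable.pred M (\<lambda>\<omega>. \<forall>j<n. a j < X j \<omega>)" using assms(5) by measurable
    qed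
    also have "\<dots> = ennreal (phi bt c (\<Sum>j\<in>N. ap j))"
      using surv[of ap] by (simp add: P.emeasure_eq_measure ap_def N_def)
    also have "\<dots> = ennreal (En bt c 0 (\<Sum>j\<in>N. ap j))" by (simp add: En_0)
    also have "\<dots> = (\<integral>\<^sup>+ u. ennreal (Eh bt c n ((\<Sum>j\<in>N. ap j) + u) * u ^ (n - 1) / fact (n - 1)) * indicator {0<..} u \<partial>lborel)"
      by (rule En_integral[symmetric, OF c bt _ assms(4)]) (simp add: ap_def sum_nonneg)
    also have "\<dots> = (\<integral>\<^sup>+ u. ennreal (Eh bt c n ((\<Sum>j\<in>N. ap j) + u)) * ennreal (u ^ (card N - 1) / fact (card N - 1)) * indicator {0<..} u \<partial>lborel)"
    proof (rule nn_integral_cong)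
      fix u :: real
      show "ennreal (Eh bt c n ((\<Sum>j\<in>N. ap j) + u) * u ^ (n - 1) / fact (n - 1)) * indicator {0<..} u =
            ennreal (Eh bt c n ((\<Sum>j\<in>N. ap j) + u)) * ennreal (u ^ (card N - 1) / fact (card N - 1)) * indicator {0<..} u"
      proof (cases "u > 0")
        case True
        have "0 \<le> Eh bt c n ((\<Sum>j\<in>N. ap j) + u)"
          unfolding Eh_def using c bt by (intro En_nonneg) (auto simp: add_pos_nonneg)
        moreover have "0 \<le> u ^ (n - 1) / fact (n - 1)" using True by simp
        ultimately have "ennreal (Eh bt c n ((\<Sum>j\<in>N. ap j) + u) * (u ^ (n - 1) / fact (n - 1))) =
            ennreal (Eh bt c n ((\<Sum>j\<in>N. ap j) + u)) * ennreal (u ^ (n - 1) / fact (n - 1))"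
          by (rule ennreal_mult)
        then show ?thesis using True by (simp add: cardN)
      qed simp
    qed
    also have "\<dots> = (\<integral>\<^sup>+ z. ennreal (Eh bt c n (\<Sum>j\<in>N. z j)) * indicator {z. \<forall>j\<in>N. ap j < z j} z \<partial>?Mp)"
      by (rule FS[symmetric, OF finN Nne]) (use c in measurable)
    also have "\<dots> = (\<integral>\<^sup>+ z. g z * indicator (rect N a) z \<partial>?Mp)"
    proof (rule nn_integral_cong)
      fix z assume z: "z \<in> space ?Mp"
      then have "z \<in> (\<Pi>\<^sub>E i\<in>N. UNIV)" by (simp add: space_PiM)
      then show "ennreal (Eh bt c n (\<Sum>j\<in>N. z j)) * indicator {z. \<forall>j\<in>N. ap j < z j} z = g z * indicator (rect N a) z"
        by (auto simp: g_def rect_def ap_def split: split_indicator)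
    qed
    also have "\<dots> = emeasure (density ?Mp g) (rect N a)"
      by (rule emeasure_density[OF g_meas rect_sets[OF finN], symmetric])
    finally show ?thesis .
  qed
  have joint: "distr M ?Mp Xv = density ?Mp g"
  proof (rule measure_eqI_generator_eq[where E = "range (rect N)" and \<Omega> = "\<Pi>\<^sub>E i\<in>N. UNIV" and A = "\<lambda>k. rect N (\<lambda>_. - real k)"])
    show "Int_stable (range (rect N))"
    proof (rule Int_stableI, safe)
      fix a a'
      have "rect N a \<inter> rect N a' = rect N (\<lambda>j. max (a j) (a' j))" by (auto simp: rect_def)
      then show "rect N a \<inter> rect N a' \<in> range (rect N)" by auto
    qed
    show "range (rect N) \<subseteq> Pow (\<Pi>\<^sub>E i\<in>N. UNIV)" by (auto simp: rect_def)
    show "\<And>Y. Y \<in> range (rect N) \<Longrightarrow> emeasure (distr M ?Mp Xv) Y = emeasure (density ?Mp g) Y"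
      using rect_eq by auto
    show "sets (distr M ?Mp Xv) = sigma_sets (\<Pi>\<^sub>E i\<in>N. UNIV) (range (rect N))"
      using sets_PiM_rect[OF finN] by simp
    show "sets (density ?Mp g) = sigma_sets (\<Pi>\<^sub>E i\<in>N. UNIV) (range (rect N))"
      using sets_PiM_rect[OF finN] by simp
    show "range (\<lambda>k. rect N (\<lambda>_. - real k)) \<subseteq> range (rect N)" by auto
    show "(\<Union>k. rect N (\<lambda>_. - real k)) = (\<Pi>\<^sub>E i\<in>N. UNIV)"
    proof safe
      fix f assume f: "f \<in> (\<Pi>\<^sub>E i\<in>N. (UNIV::real set))"
      obtain k :: nat where k: "Max ((\<lambda>i. - f i) ` N) < real k" using reals_Archimedean2 by blast
      have "\<forall>i\<in>N. - real k < f i"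
      proof
        fix i assume "i \<in> N"
        then have "- f i \<le> Max ((\<lambda>i. - f i) ` N)" using finN by (intro Max_ge) auto
        then show "- real k < f i" using k by linarith
      qed
      then show "f \<in> (\<Union>k. rect N (\<lambda>_. - real k))" using f by (auto simp: rect_def)
    qed (auto simp: rect_def)
    show "emeasure (distr M ?Mp Xv) (rect N (\<lambda>_. - real k)) \<noteq> \<infinity>" for k
    proof -
      interpret Q: prob_space "distr M ?Mp Xv" by (rule P.prob_space_distr[OF Xv_meas])
      show ?thesis by simp
    qed
  qed
  define sumN where "sumN z = (\<Sum>j\<in>N. z j)" for z :: "nat \<Rightarrow> real"
  have sumN_meas: "sumN \<in> borel_measurable ?Mp" unfolding sumN_def using finN by measurable
  have S_meas: "(\<lambda>\<omega>. \<Sum>i<n. X i \<omega>) \<in> measurable M lborel"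
    using assms(5) by (simp add: borel_measurable_sum)
  define f where "f x = ennreal (if x > 0 then Eh bt c n x * x ^ (n - 1) / fact (n - 1) else 0)" for x
  have f_eq: "(\<lambda>x. ennreal (ig_sum_pdf lam mu n x)) = f"
  proof
    fix x show "ennreal (ig_sum_pdf lam mu n x) = f x"
      unfolding f_def ig_sum_pdf_En[OF assms(2-4)] bt_def[symmetric] c_def[symmetric]
      by (simp add: Eh_eq)
  qed
  have f_meas: "f \<in> borel_measurable lborel" unfolding f_def using c by measurable
  have "distr M lborel (\<lambda>\<omega>. \<Sum>i<n. X i \<omega>) = distr M lborel (sumN \<circ> Xv)"
    by (rule distr_cong) (auto simp: sumN_def Xv_def N_def)
  also have "\<dots> = distr (distr M ?Mp Xv) lborel sumN"
    using sumN_meas Xv_meas by (simp add: distr_distr)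
  also have "\<dots> = distr (density ?Mp g) lborel sumN" unfolding joint ..
  also have "\<dots> = density lborel f"
  proof (rule measure_eqI)
    show "sets (distr (density ?Mp g) lborel sumN) = sets (density lborel f)" by simp
    fix A assume "A \<in> sets (distr (density ?Mp g) lborel sumN)"
    then have A[measurable]: "A \<in> sets borel" by simp
    have "emeasure (distr (density ?Mp g) lborel sumN) A = emeasure (density ?Mp g) (sumN -` A \<inter> space ?Mp)"
      using sumN_meas by (subst emeasure_distr) auto
    also have "\<dots> = (\<integral>\<^sup>+ z. g z * indicator (sumN -` A \<inter> space ?Mp) z \<partial>?Mp)"
      using sumN_meas by (subst emeasure_density[OF g_meas]) (auto intro: measurable_sets)
    also have "\<dots> = (\<integral>\<^sup>+ z. (ennreal (Eh bt c n (\<Sum>j\<in>N. z j)) * indicator A (\<Sum>j\<in>N. z j)) * indicator {z. \<forall>j\<in>N. (0::real) < z j} z \<partial>?Mp)"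
      by (intro nn_integral_cong) (auto simp: g_def sumN_def split: split_indicator)
    also have "\<dots> = (\<integral>\<^sup>+ u. (ennreal (Eh bt c n ((\<Sum>j\<in>N. (0::real)) + u)) * indicator A ((\<Sum>j\<in>N. (0::real)) + u)) * ennreal (u ^ (card N - 1) / fact (card N - 1)) * indicator {0<..} u \<partial>lborel)"
      using FS[OF finN Nne, of "\<lambda>u. ennreal (Eh bt c n u) * indicator A u" "\<lambda>_. 0"] c by simp
    also have "\<dots> = (\<integral>\<^sup>+ u. f u * indicator A u \<partial>lborel)"
    proof (rule nn_integral_cong)
      fix u :: real
      show "(ennreal (Eh bt c n ((\<Sum>j\<in>N. (0::real)) + u)) * indicator A ((\<Sum>j\<in>N. (0::real)) + u)) * ennreal (u ^ (card N - 1) / fact (card N - 1)) * indicator {0<..} u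
          = f u * indicator A u"
      proof (cases "u > 0")
        case True
        have "0 \<le> Eh bt c n u"
          unfolding Eh_def using c bt by (intro En_nonneg) (auto simp: add_pos_nonneg)
        moreover have "0 \<le> u ^ (n - 1) / fact (n - 1)" using True by simp
        ultimately have "ennreal (Eh bt c n u * (u ^ (n - 1) / fact (n - 1))) =
            ennreal (Eh bt c n u) * ennreal (u ^ (n - 1) / fact (n - 1))"
          by (rule ennreal_mult)
        then show ?thesis using True by (simp add: cardN f_def mult_ac)
      qed (simp add: f_def)
    qed
    also have "\<dots> = emeasure (density lborel f) A"
      by (rule emeasure_density[OF f_meas, symmetric]) simp
    finally show "emeasure (distr (density ?Mp g) lborel sumN) A = emeasure (density lborel f) A" .
  qed
  finally have "distr M lborel (\<lambda>\<omega>. \<Sum>i<n. X i \<omega>) = density lborel f" .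
  then show ?thesis unfolding distributed_def f_eq using f_meas S_meas by simp
qed


end
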